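(* Let $d\ge1$ and consider either $\gamma\in(1,3]$ when $d=1$, or $\gamma\in\left(1,\frac{d+4}{d+2}\right]\cup\left\{\frac{d+2}{d}\right\}$ when $d\ge2$. Let $\Omega=\mathbb{R}^d$ or $\mathbb{T}^d$, and let $f,g\ge0$ be functions on $\Omega\times\mathbb{R}^d$ whose macroscopic quantities $\rho_h,u_h$ ($h\in\{f,g\}$) satisfy: (i) in the case $\gamma=\frac{d+2}{d}$: there exist $C_1,C_2>0$ with $\rho_h\le C_1$ and $|u_h|\le C_2$ on $\Omega$ for $h\in\{f,g\}$; (ii) in the case $\gamma\in(1,3]$ with $d=1$ or $\gamma\in(1,\frac{d+4}{d+2}]$ with $d\ge2$ (with $\gamma\ne\frac{d+2}{d}$): there exist $C_0,C_1,C_2>0$ with $C_0\le\rho_h\le C_1$ and $|u_h|\le C_2$ on $\Omega$ for $h\in\{f,g\}$. Then $$\iint_{\Omega\times\mathbb{R}^d}(1+|v|^2)\,|M[f]-M[g]|\,dxdv\le C\int_\Omega\big(|\rho_f-\rho_g|+|u_f-u_g|\big)\,dx$$ for some $C>0$ depending only on $d$, $\gamma$, and the constants $C_i$.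
   Context: For $h\ge0$ on $\Omega\times\mathbb{R}^d$: $\rho_h(x)=\int_{\mathbb{R}^d}h\,dv$ and $\rho_h u_h=\int_{\mathbb{R}^d}vh\,dv$. Let $|\mathbb{S}_{d-1}|=\frac{2\pi^{d/2}}{\Gamma(d/2)}$, $c_d=\frac{d}{|\mathbb{S}_{d-1}|}$, $n=\frac{2}{\gamma-1}-d$, $c=\left(\frac{2\gamma}{\gamma-1}\right)^{-\frac1{\gamma-1}}\frac{\Gamma(\frac{\gamma}{\gamma-1})}{\pi^{d/2}\Gamma(\frac n2+1)}$. The equilibrium function is $M[h]=\mathbf{1}_{|u_h-v|^d\le c_d\rho_h}$ if $\gamma=\frac{d+2}{d}$, and $M[h]=c\left(\frac{2\gamma}{\gamma-1}\rho_h^{\gamma-1}-|v-u_h|^2\right)_+^{n/2}$ if $\gamma\in(1,\frac{d+2}{d})$. *)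

theory Defs
  imports "HOL-Analysis.Analysis"
begin

text \<open>Kinetic densities are functions h x v with x in the physical domain and
  v in the velocity space, both modelled on real^'n with d = CARD('n).\<close>


definition rho :: "(real^'n \<Rightarrow> real^'n \<Rightarrow> real) \<Rightarrow> real^'n \<Rightarrow> real" where
  "rho h x = (\<integral>v. h x v \<partial>lborel)"

definition mom :: "(real^'n \<Rightarrow> real^'n \<Rightarrow> real) \<Rightarrow> real^'n \<Rightarrow> real^'n" where
  "mom h x = (\<integral>v. h x v *\<^sub>R v \<partial>lborel)"

definition vel :: "(real^'n \<Rightarrow> real^'n \<Rightarrow> real) \<Rightarrow> real^'n \<Rightarrow> real^'n" where
  "vel h x = (if rho h x = 0 then 0 else (1 / rho h x) *\<^sub>R mom h x)"

definition sphere_area :: "nat \<Rightarrow> real" where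
  "sphere_area d = 2 * pi powr (real d / 2) / Gamma (real d / 2)"

definition c_d :: "nat \<Rightarrow> real" where
  "c_d d = real d / sphere_area d"

definition n_exp :: "nat \<Rightarrow> real \<Rightarrow> real" where
  "n_exp d \<gamma> = 2 / (\<gamma> - 1) - real d"

definition c_const :: "nat \<Rightarrow> real \<Rightarrow> real" where
  "c_const d \<gamma> = (2 * \<gamma> / (\<gamma> - 1)) powr (- 1 / (\<gamma> - 1)) * Gamma (\<gamma> / (\<gamma> - 1))
      / (pi powr (real d / 2) * Gamma (n_exp d \<gamma> / 2 + 1))"

definition Mloc :: "real \<Rightarrow> real \<Rightarrow> real^'n \<Rightarrow> real^'n \<Rightarrow> real" where
  "Mloc \<gamma> r w v =
     (let d = CARD('n) in
      if \<gamma> = (real d + 2) / real d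
      then (if norm (w - v) ^ d \<le> c_d d * r then 1 else 0)
      else c_const d \<gamma> * (max 0 (2 * \<gamma> / (\<gamma> - 1) * r powr (\<gamma> - 1) - (norm (v - w))\<^sup>2))
             powr (n_exp d \<gamma> / 2))"

definition Meq :: "real \<Rightarrow> (real^'n \<Rightarrow> real^'n \<Rightarrow> real) \<Rightarrow> real^'n \<Rightarrow> real^'n \<Rightarrow> real" where
  "Meq \<gamma> h x v = Mloc \<gamma> (rho h x) (vel h x) v"

text \<open>Physical domain: R^d (torus = False) with Lebesgue measure, or the torus T^d
  (torus = True), represented by 1-periodic functions integrated over the unit cube.\<close>
definition dom_measure :: "bool \<Rightarrow> (real^'n) measure" where
  "dom_measure torus = (if torus then restrict_space lborel (cbox 0 One) else lborel)"

definition periodic_in_x :: "(real^'n \<Rightarrow> real^'n \<Rightarrow> real) \<Rightarrow> bool" where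
  "periodic_in_x h \<longleftrightarrow> (\<forall>x v i. h (x + axis i 1) v = h x v)"

definition admissible_gamma :: "nat \<Rightarrow> real \<Rightarrow> bool" where
  "admissible_gamma d \<gamma> \<longleftrightarrow>
     (d = 1 \<and> 1 < \<gamma> \<and> \<gamma> \<le> 3) \<or>
     (d \<ge> 2 \<and> ((1 < \<gamma> \<and> \<gamma> \<le> (real d + 4) / (real d + 2)) \<or> \<gamma> = (real d + 2) / real d))"

end

theory Submission
  imports Defs
begin

lemma nn_integral_affine_eq:
  fixes f :: "'a::euclidean_space \<Rightarrow> ennreal"
  assumes f: "f \<in> borel_measurable borel" and c: "c \<noteq> 0"
  shows "integral\<^sup>N lborel f = (\<integral>\<^sup>+ x. ennreal (\<bar>c\<bar> ^ DIM('a)) * f (t + c *\<^sub>R x) \<partial>lborel)"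
proof -
  have "integral\<^sup>N lborel f = integral\<^sup>N (density (distr lborel borel (\<lambda>x. t + c *\<^sub>R x)) (\<lambda>_. \<bar>c\<bar>^DIM('a))) f"
    using arg_cong[OF lborel_affine[OF c, of t], where f="\<lambda>M. integral\<^sup>N M f"] by simp
  also have "\<dots> = (\<integral>\<^sup>+ x. ennreal (\<bar>c\<bar> ^ DIM('a)) * f x \<partial>(distr lborel borel (\<lambda>x. t + c *\<^sub>R x)))"
    using f by (subst nn_integral_density) auto
  also have "\<dots> = (\<integral>\<^sup>+ x. ennreal (\<bar>c\<bar> ^ DIM('a)) * f (t + c *\<^sub>R x) \<partial>lborel)"
    using f by (subst nn_integral_distr) auto
  finally show ?thesis .
qed

lemma powr_lip:
  fixes s t B q :: real
  assumes "0 \<le> s" "s \<le> t" "t \<le> B" "1 \<le> q"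
  shows "t powr q - s powr q \<le> q * B powr (q - 1) * (t - s)"
proof (cases "s = t")
  case True then show ?thesis by simp
next
  case False
  then have st: "s < t" using assms by simp
  show ?thesis
  proof (cases "s = 0")
    case True
    have "t powr q = t * t powr (q - 1)"
      using st True by (simp add: powr_mult_base)
    also have "\<dots> \<le> t * B powr (q - 1)"
      using st True assms by (intro mult_left_mono powr_mono2) auto
    also have "\<dots> \<le> q * B powr (q - 1) * t"
      using st True assms by (simp add: mult_right_mono)
    finally show ?thesis using True st by simp
  next
    case False
    then have s0: "0 < s" using assms by simp
    have "\<exists>z. s < z \<and> z < t \<and> t powr q - s powr q = (t - s) * (q * z powr (q - 1))"
    proof (rule MVT2[OF st])
      fix x assume "s \<le> x" "x \<le> t"
      then have "x > 0" using s0 by simp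
      then show "((\<lambda>x. x powr q) has_real_derivative q * x powr (q - 1)) (at x)"
        by (auto intro!: derivative_eq_intros)
    qed
    then obtain z where z: "s < z" "z < t" "t powr q - s powr q = (t - s) * (q * z powr (q - 1))" by blast
    have "z powr (q - 1) \<le> B powr (q - 1)" using z s0 assms by (intro powr_mono2) auto
    then have "(t - s) * (q * z powr (q - 1)) \<le> (t - s) * (q * B powr (q - 1))"
      using st assms by (intro mult_left_mono) auto
    then show ?thesis using z by (simp add: algebra_simps)
  qed
qed

locale profile =
  fixes P :: "real \<Rightarrow> 'a::euclidean_space \<Rightarrow> real" and q :: real
  assumes nonneg: "\<And>a u. 0 \<le> P a u"
   and meas[measurable]: "\<And>a. P a \<in> borel_measurable borel"
   and le1: "\<And>u. P 1 u \<le> 1"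
   and supp: "\<And>a u. 0 \<le> a \<Longrightarrow> a < norm u \<Longrightarrow> P a u = 0"
   and scale: "\<And>a t. 0 < a \<Longrightarrow> P a (a *\<^sub>R t) = a powr (q - DIM('a)) * P 1 t"
   and mono: "\<And>a b u. 0 \<le> a \<Longrightarrow> a \<le> b \<Longrightarrow> P a u \<le> P b u"
   and env_up: "\<And>a e \<delta> u. 0 \<le> a \<Longrightarrow> norm e \<le> \<delta> \<Longrightarrow> P a (u + e) \<le> P (a + \<delta>) u"
   and env_lo: "\<And>a e \<delta> u. 0 < a - \<delta> \<Longrightarrow> norm e \<le> \<delta> \<Longrightarrow> P (a - \<delta>) u \<le> P a (u + e)"
   and q1: "1 \<le> q"
begin

definition J :: real where "J = enn2real (\<integral>\<^sup>+ t. ennreal (P 1 t) \<partial>lborel)"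

lemma J_fin: "(\<integral>\<^sup>+ t. ennreal (P 1 t) \<partial>lborel) = ennreal J"
proof -
  have "(\<integral>\<^sup>+ t. ennreal (P 1 t) \<partial>lborel) \<le> (\<integral>\<^sup>+ t. indicator (cball (0::'a) 1) t \<partial>lborel)"
  proof -
    have "\<And>t::'a. ennreal (P 1 t) \<le> indicator (cball 0 1) t"
      using le1 supp[of 1] by (auto simp: indicator_def not_le)
    then show ?thesis by (intro nn_integral_mono) auto
  qed
  also have "\<dots> = emeasure lborel (cball (0::'a) 1)" by simp
  also have "\<dots> < \<infinity>" by (rule emeasure_lborel_cball_finite)
  finally show ?thesis unfolding J_def by (simp add: less_top)
qed

lemma J_nonneg: "0 \<le> J" unfolding J_def by simp

lemma int_shift: "(\<integral>\<^sup>+ u. ennreal (P a (u - w)) \<partial>lborel) = (\<integral>\<^sup>+ u. ennreal (P a u) \<partial>lborel)"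
proof -
  have "(\<integral>\<^sup>+ u. ennreal (P a (u - w)) \<partial>lborel) =
     (\<integral>\<^sup>+ x. ennreal (\<bar>1\<bar> ^ DIM('a)) * ennreal (P a ((w + 1 *\<^sub>R x) - w)) \<partial>lborel)"
    by (rule nn_integral_affine_eq) auto
  then show ?thesis by simp
qed

lemma int_P: assumes "0 \<le> a" shows "(\<integral>\<^sup>+ u. ennreal (P a (u - w)) \<partial>lborel) = ennreal (J * a powr q)"
proof (cases "a = 0")
  case True
  have "(\<integral>\<^sup>+ u. ennreal (P a u) \<partial>lborel) = (\<integral>\<^sup>+ u. 0 \<partial>(lborel::'a measure))"
  proof -
    have "AE u in lborel. u \<noteq> 0"
      by (rule AE_I[of _ _ "{0}"]) auto
    then have "AE u in lborel. ennreal (P a u) = 0"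
      by eventually_elim (use True supp in auto)
    then show ?thesis by (intro nn_integral_cong_AE) auto
  qed
  then show ?thesis using True int_shift by simp
next
  case False
  then have a: "0 < a" using assms by simp
  have "(\<integral>\<^sup>+ u. ennreal (P a u) \<partial>lborel) =
     (\<integral>\<^sup>+ x. ennreal (\<bar>a\<bar> ^ DIM('a)) * ennreal (P a (0 + a *\<^sub>R x)) \<partial>lborel)"
    using a by (intro nn_integral_affine_eq) auto
  also have "\<dots> = (\<integral>\<^sup>+ x. ennreal (a powr q) * ennreal (P 1 x) \<partial>lborel)"
  proof (rule nn_integral_cong)
    fix x
    have "a ^ DIM('a) * a powr (q - DIM('a)) = a powr q"
      using a by (simp add: powr_realpow[symmetric] powr_add[symmetric])
    then have "a ^ DIM('a) * P a (a *\<^sub>R x) = a powr q * P 1 x"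
      using a by (simp add: scale mult.assoc[symmetric])
    then show "ennreal (\<bar>a\<bar> ^ DIM('a)) * ennreal (P a (0 + a *\<^sub>R x)) = ennreal (a powr q) * ennreal (P 1 x)"
      using a nonneg by (simp add: ennreal_mult'[symmetric] ennreal_mult[symmetric])
  qed
  also have "\<dots> = ennreal (a powr q) * ennreal J"
    by (subst nn_integral_cmult) (auto simp: J_fin)
  also have "\<dots> = ennreal (J * a powr q)"
    using J_nonneg by (simp add: ennreal_mult[symmetric] mult.commute)
  finally show ?thesis using int_shift by simp
qed

lemma diff_bound:
  assumes a1: "0 \<le> a1" "a1 \<le> Am" and a2: "0 \<le> a2" "a2 \<le> Am"
    and w1: "norm w1 \<le> W" and w2: "norm w2 \<le> W"
  shows "(\<integral>\<^sup>+ v. ennreal ((1 + (norm v)\<^sup>2) * \<bar>P a1 (v - w1) - P a2 (v - w2)\<bar>) \<partial>lborel)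
     \<le> ennreal ((1 + (3 * W + Am)\<^sup>2) * J * (\<bar>a1 powr q - a2 powr q\<bar> + 2 * (q * (Am + 2 * W) powr (q - 1)) * norm (w1 - w2)))"
proof -
  define \<delta> where "\<delta> = norm (w1 - w2)"
  define amax where "amax = max a1 a2"
  define amin where "amin = min a1 a2"
  define R where "R = 1 + (3 * W + Am)\<^sup>2"
  define Lip where "Lip = q * (Am + 2 * W) powr (q - 1)"
  define U where "U v = P (amax + \<delta>) (v - w1)" for v
  define L where "L v = (if 0 < amin - \<delta> then P (amin - \<delta>) (v - w1) else 0)" for v
  define Lq where "Lq = (if 0 < amin - \<delta> then (amin - \<delta>) powr q else 0)"
  have R0: "0 \<le> R" unfolding R_def by (simp add: add_nonneg_nonneg)
  have d0: "0 \<le> \<delta>" unfolding \<delta>_def by simp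
  have dW: "\<delta> \<le> 2 * W" unfolding \<delta>_def using norm_triangle_ineq4[of w1 w2] w1 w2 by simp
  have W0: "0 \<le> W" using w1 norm_ge_zero order.trans by blast
  have env: "L v \<le> P ai (v - wi) \<and> P ai (v - wi) \<le> U v" if i: "(ai = a1 \<and> wi = w1) \<or> (ai = a2 \<and> wi = w2)" for ai wi v
  proof -
    have ai: "0 \<le> ai" "amin \<le> ai" "ai \<le> amax" using i a1 a2 unfolding amin_def amax_def by auto
    have e: "norm (w1 - wi) \<le> \<delta>" using i d0 unfolding \<delta>_def by auto
    have vw: "v - wi = (v - w1) + (w1 - wi)" by simp
    have "P ai (v - wi) \<le> P (ai + \<delta>) (v - w1)" unfolding vw by (rule env_up[OF ai(1) e])
    also have "\<dots> \<le> U v" unfolding U_def using ai d0 by (intro mono) auto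
    finally have up: "P ai (v - wi) \<le> U v" .
    have lo: "L v \<le> P ai (v - wi)"
    proof (cases "0 < amin - \<delta>")
      case True
      then have "L v = P (amin - \<delta>) (v - w1)" unfolding L_def by simp
      also have "\<dots> \<le> P (ai - \<delta>) (v - w1)" using True ai by (intro mono) auto
      also have "\<dots> \<le> P ai (v - wi)" unfolding vw using True ai by (intro env_lo e) auto
      finally show ?thesis .
    next
      case False then show ?thesis unfolding L_def using nonneg by simp
    qed
    show ?thesis using up lo by simp
  qed
  have L0: "0 \<le> L v" for v unfolding L_def using nonneg by simp
  have pw: "(1 + (norm v)\<^sup>2) * \<bar>P a1 (v - w1) - P a2 (v - w2)\<bar> \<le> R * (U v - L v)" for v
  proof (cases "U v = 0")
    case True
    have "L v = 0" "P a1 (v - w1) = 0" "P a2 (v - w2) = 0"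
      using True env[of a1 w1 v] env[of a2 w2 v] L0[of v] nonneg[of a1 "v - w1"] nonneg[of a2 "v - w2"]
      by auto
    then show ?thesis using True by simp
  next
    case False
    then have "norm (v - w1) \<le> amax + \<delta>" unfolding U_def using supp[of "amax + \<delta>" "v - w1"] a1 a2 d0
      unfolding amax_def by force
    then have "norm v \<le> 3 * W + Am"
      using norm_triangle_ineq2[of v w1] w1 dW a1 a2 unfolding amax_def by auto
    then have "(norm v)\<^sup>2 \<le> (3 * W + Am)\<^sup>2" by (intro power_mono) auto
    then have "1 + (norm v)\<^sup>2 \<le> R" unfolding R_def by simp
    moreover have "\<bar>P a1 (v - w1) - P a2 (v - w2)\<bar> \<le> U v - L v"
      using env[of a1 w1 v] env[of a2 w2 v] by auto
    moreover have "0 \<le> R" unfolding R_def by (simp add: add_nonneg_nonneg)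
    ultimately show ?thesis by (intro mult_mono) auto
  qed
  have [measurable]: "U \<in> borel_measurable borel" unfolding U_def[abs_def] by measurable
  have [measurable]: "L \<in> borel_measurable borel" unfolding L_def[abs_def] by measurable
  have intU: "(\<integral>\<^sup>+ v. ennreal (U v) \<partial>lborel) = ennreal (J * (amax + \<delta>) powr q)"
    unfolding U_def using a1 a2 d0 unfolding amax_def by (intro int_P) auto
  have intL: "(\<integral>\<^sup>+ v. ennreal (L v) \<partial>lborel) = ennreal (J * Lq)"
    unfolding L_def Lq_def by (cases "0 < amin - \<delta>") (auto simp: int_P)
  have "(\<integral>\<^sup>+ v. ennreal ((1 + (norm v)\<^sup>2) * \<bar>P a1 (v - w1) - P a2 (v - w2)\<bar>) \<partial>lborel)
      \<le> (\<integral>\<^sup>+ v. ennreal R * (ennreal (U v) - ennreal (L v)) \<partial>lborel)"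
  proof (intro nn_integral_mono)
    fix v
    have "ennreal ((1 + (norm v)\<^sup>2) * \<bar>P a1 (v - w1) - P a2 (v - w2)\<bar>) \<le> ennreal (R * (U v - L v))"
      using pw by (intro ennreal_leI) auto
    also have "\<dots> = ennreal R * (ennreal (U v) - ennreal (L v))"
      using L0[of v] R0 by (simp add: ennreal_minus ennreal_mult'[symmetric])
    finally show "ennreal ((1 + (norm v)\<^sup>2) * \<bar>P a1 (v - w1) - P a2 (v - w2)\<bar>) \<le> ennreal R * (ennreal (U v) - ennreal (L v))" .
  qed
  also have "\<dots> = ennreal R * (\<integral>\<^sup>+ v. (ennreal (U v) - ennreal (L v)) \<partial>lborel)"
    by (intro nn_integral_cmult) auto
  also have "(\<integral>\<^sup>+ v. (ennreal (U v) - ennreal (L v)) \<partial>lborel) = ennreal (J * (amax + \<delta>) powr q) - ennreal (J * Lq)"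
  proof -
    have "L v \<le> U v" for v using env[of a1 w1 v] by auto
    then have "AE x in lborel. ennreal (L x) \<le> ennreal (U x)" by (auto intro: ennreal_leI)
    then show ?thesis by (subst nn_integral_diff) (auto simp: intU intL)
  qed
  also have "\<dots> = ennreal (J * ((amax + \<delta>) powr q - Lq))"
    using J_nonneg by (subst ennreal_minus) (auto simp: Lq_def algebra_simps)
  also have "ennreal R * \<dots> = ennreal (R * J * ((amax + \<delta>) powr q - Lq))"
    using R0 by (simp add: ennreal_mult'[symmetric] mult.assoc)
  also have "\<dots> \<le> ennreal (R * J * (\<bar>a1 powr q - a2 powr q\<bar> + 2 * Lip * \<delta>))"
  proof (intro ennreal_leI mult_left_mono)
    have B: "amax + \<delta> \<le> Am + 2 * W" using dW a1 a2 unfolding amax_def by auto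
    have s1: "(amax + \<delta>) powr q - amax powr q \<le> Lip * \<delta>"
      using powr_lip[of amax "amax + \<delta>" "Am + 2 * W" q] q1 a1 a2 d0 B unfolding amax_def Lip_def by auto
    have s2: "amax powr q - amin powr q = \<bar>a1 powr q - a2 powr q\<bar>"
    proof (cases "a1 \<le> a2")
      case True
      then have "a1 powr q \<le> a2 powr q" using a1 q1 by (intro powr_mono2) auto
      then show ?thesis using True unfolding amax_def amin_def by simp
    next
      case False
      then have "a2 powr q \<le> a1 powr q" using a2 q1 by (intro powr_mono2) auto
      then show ?thesis using False unfolding amax_def amin_def by simp
    qed
    have s3: "amin powr q - Lq \<le> Lip * \<delta>"
    proof (cases "0 < amin - \<delta>")
      case True
      have "amin \<le> Am + 2 * W" using B d0 unfolding amax_def amin_def by auto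
      then have "amin powr q - (amin - \<delta>) powr q \<le> Lip * (amin - (amin - \<delta>))"
        unfolding Lip_def using True q1 d0 by (intro powr_lip) auto
      then show ?thesis using True unfolding Lq_def by simp
    next
      case False
      then have "amin powr q - 0 powr q \<le> Lip * (amin - 0)"
        using powr_lip[of 0 amin "Am + 2 * W" q] q1 a1 a2 d0 B
        unfolding amax_def amin_def Lip_def Lq_def by auto
      moreover have "Lip * amin \<le> Lip * \<delta>"
        using False q1 a1 a2 W0 unfolding Lip_def by (intro mult_left_mono) auto
      ultimately show ?thesis unfolding Lq_def using False by simp
    qed
    show "(amax + \<delta>) powr q - Lq \<le> \<bar>a1 powr q - a2 powr q\<bar> + 2 * Lip * \<delta>"
      using s1 s2 s3 by linarith
    show "0 \<le> R * J" unfolding R_def using J_nonneg by simp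
  qed
  finally show ?thesis unfolding R_def Lip_def \<delta>_def by (simp add: mult.assoc)
qed

end

definition Pind :: "real \<Rightarrow> 'a::euclidean_space \<Rightarrow> real" where
  "Pind a u = (if norm u \<le> a then 1 else 0)"

lemma profile_ind: "profile (Pind :: real \<Rightarrow> 'a::euclidean_space \<Rightarrow> real) (real DIM('a))"
proof
  show "0 \<le> Pind a u" for a u by (simp add: Pind_def)
  show "Pind a \<in> borel_measurable borel" for a unfolding Pind_def[abs_def] by measurable
  show "Pind 1 u \<le> 1" for u by (simp add: Pind_def)
  show "0 \<le> a \<Longrightarrow> a < norm u \<Longrightarrow> Pind a u = 0" for a and u :: 'a by (simp add: Pind_def)
  show "Pind a (a *\<^sub>R t) = a powr (real DIM('a) - real DIM('a)) * Pind 1 t" if "0 < a" for a and t :: 'a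
    using that by (simp add: Pind_def)
  show "0 \<le> a \<Longrightarrow> a \<le> b \<Longrightarrow> Pind a u \<le> Pind b u" for a b and u :: 'a by (simp add: Pind_def)
  show "Pind a (u + e) \<le> Pind (a + \<delta>) u" if "0 \<le> a" "norm e \<le> \<delta>" for a \<delta> and u e :: 'a
    using that norm_triangle_ineq4[of "u + e" e] by (auto simp: Pind_def)
  show "Pind (a - \<delta>) u \<le> Pind a (u + e)" if "0 < a - \<delta>" "norm e \<le> \<delta>" for a \<delta> and u e :: 'a
    using that norm_triangle_ineq[of u e] by (auto simp: Pind_def)
  show "1 \<le> real DIM('a)" by simp
qed

definition Ppow :: "real \<Rightarrow> real \<Rightarrow> 'a::euclidean_space \<Rightarrow> real" where
  "Ppow p a u = max 0 (a\<^sup>2 - (norm u)\<^sup>2) powr p"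

lemma profile_pow: assumes p: "0 < p"
  shows "profile (Ppow p :: real \<Rightarrow> 'a::euclidean_space \<Rightarrow> real) (2 * p + real DIM('a))"
proof
  show "0 \<le> Ppow p a u" for a u by (simp add: Ppow_def)
  show "Ppow p a \<in> borel_measurable borel" for a unfolding Ppow_def[abs_def] by measurable
  show "Ppow p 1 u \<le> 1" for u :: 'a
  proof -
    have "max 0 (1\<^sup>2 - (norm u)\<^sup>2) powr p \<le> 1 powr p" using p by (intro powr_mono2) auto
    then show ?thesis unfolding Ppow_def by simp
  qed
  show "0 \<le> a \<Longrightarrow> a < norm u \<Longrightarrow> Ppow p a u = 0" for a and u :: 'a
  proof -
    assume "0 \<le> a" "a < norm u"
    then have "a\<^sup>2 < (norm u)\<^sup>2" by (intro power_strict_mono) auto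
    then show ?thesis by (simp add: Ppow_def)
  qed
  show "Ppow p a (a *\<^sub>R t) = a powr (2 * p + real DIM('a) - real DIM('a)) * Ppow p 1 t" if "0 < a" for a and t :: 'a
  proof -
    have "max 0 (a\<^sup>2 - (norm (a *\<^sub>R t))\<^sup>2) = a\<^sup>2 * max 0 (1 - (norm t)\<^sup>2)"
      using that by (simp add: power_mult_distrib max_mult_distrib_left algebra_simps)
    then have "Ppow p a (a *\<^sub>R t) = (a\<^sup>2) powr p * Ppow p 1 t"
      unfolding Ppow_def by (simp add: powr_mult)
    also have "(a\<^sup>2) powr p = a powr (2 * p)"
      using that by (simp add: powr_powr[symmetric] powr_realpow)
    finally show ?thesis by simp
  qed
  show "Ppow p a u \<le> Ppow p b u" if "0 \<le> a" "a \<le> b" for a b and u :: 'a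
  proof -
    have "a\<^sup>2 \<le> b\<^sup>2" using that by (intro power_mono) auto
    then show ?thesis unfolding Ppow_def using p by (intro powr_mono2) auto
  qed
  show "Ppow p a (u + e) \<le> Ppow p (a + \<delta>) u" if "0 \<le> a" "norm e \<le> \<delta>" for a \<delta> and u e :: 'a
  proof -
    have "max 0 (a\<^sup>2 - (norm (u + e))\<^sup>2) \<le> max 0 ((a + \<delta>)\<^sup>2 - (norm u)\<^sup>2)"
    proof (cases "norm (u + e) \<le> a")
      case True
      have "norm u \<le> norm (u + e) + \<delta>" using norm_triangle_ineq4[of "u + e" e] that by simp
      then have "(norm u)\<^sup>2 \<le> (norm (u + e) + \<delta>)\<^sup>2" by (intro power_mono) auto
      also have "\<dots> \<le> (norm (u + e))\<^sup>2 + 2 * a * \<delta> + \<delta>\<^sup>2"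
      proof -
        have "0 \<le> \<delta>" using that norm_ge_zero[of e] by linarith
        then have "norm (u + e) * \<delta> \<le> a * \<delta>" using True by (intro mult_right_mono) auto
        then show ?thesis by (simp add: power2_sum)
      qed
      finally show ?thesis by (simp add: power2_sum)
    next
      case False
      then have "a\<^sup>2 \<le> (norm (u + e))\<^sup>2" using that by (intro power_mono) auto
      then show ?thesis by simp
    qed
    then show ?thesis unfolding Ppow_def using p by (intro powr_mono2) auto
  qed
  show "Ppow p (a - \<delta>) u \<le> Ppow p a (u + e)" if "0 < a - \<delta>" "norm e \<le> \<delta>" for a \<delta> and u e :: 'a
  proof -
    have "max 0 ((a - \<delta>)\<^sup>2 - (norm u)\<^sup>2) \<le> max 0 (a\<^sup>2 - (norm (u + e))\<^sup>2)"
    proof (cases "norm u \<le> a - \<delta>")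
      case True
      have "norm (u + e) \<le> norm u + \<delta>" using norm_triangle_ineq[of u e] that by simp
      then have "(norm (u + e))\<^sup>2 \<le> (norm u + \<delta>)\<^sup>2" by (intro power_mono) auto
      moreover have "(a - \<delta>)\<^sup>2 - (norm u)\<^sup>2 \<le> a\<^sup>2 - (norm u + \<delta>)\<^sup>2"
      proof -
        have "0 \<le> \<delta>" using that norm_ge_zero[of e] by linarith
        then have "(a - \<delta>)\<^sup>2 - (norm u)\<^sup>2 - (a\<^sup>2 - (norm u + \<delta>)\<^sup>2) = 2 * \<delta> * (norm u + \<delta> - a)"
          by (simp add: power2_eq_square algebra_simps)
        also have "\<dots> \<le> 0" using True \<open>0 \<le> \<delta>\<close> by (intro mult_nonneg_nonpos) auto
        finally show ?thesis by simp
      qed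
      ultimately show ?thesis by simp
    next
      case False
      then have "(a - \<delta>)\<^sup>2 \<le> (norm u)\<^sup>2" using that by (intro power_mono) auto
      then show ?thesis by simp
    qed
    then show ?thesis unfolding Ppow_def using p by (intro powr_mono2) auto
  qed
  have "1 \<le> DIM('a)" using DIM_positive[where 'a='a] by linarith
  then show "1 \<le> 2 * p + real DIM('a)" using p by linarith
qed

lemma rho_meas:
  fixes h :: "real^'n \<Rightarrow> real^'n \<Rightarrow> real"
  assumes hm: "(\<lambda>(x, v). h x v) \<in> borel_measurable borel"
  shows "rho h \<in> borel_measurable borel" "vel h \<in> borel_measurable borel"
proof -
  have hm': "(\<lambda>(x, v). h x v) \<in> borel_measurable (lborel \<Otimes>\<^sub>M lborel)"
    using hm by (simp add: lborel_prod)
  have "(\<lambda>x. \<integral>v. h x v \<partial>lborel) \<in> borel_measurable lborel"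
    by (rule lborel.borel_measurable_lebesgue_integral[OF hm'])
  then show r: "rho h \<in> borel_measurable borel"
    unfolding rho_def[abs_def] by simp
  have hm2: "(\<lambda>(x, v). h x v *\<^sub>R v) \<in> borel_measurable (lborel \<Otimes>\<^sub>M lborel)"
    using hm' by measurable
  have "(\<lambda>x. \<integral>v. h x v *\<^sub>R v \<partial>lborel) \<in> borel_measurable lborel"
    using lborel.borel_measurable_lebesgue_integral[OF hm2] by simp
  then have m: "mom h \<in> borel_measurable borel"
    unfolding mom_def[abs_def] by simp
  show "vel h \<in> borel_measurable borel"
    unfolding vel_def[abs_def] using r m by measurable
qed

lemma dom_meas:
  assumes "g \<in> borel_measurable borel"
  shows "g \<in> borel_measurable (dom_measure torus)"
  using assms unfolding dom_measure_def
  by (auto intro: measurable_restrict_space1)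

lemma pow_le_powr_iff:
  fixes x y :: real assumes "0 \<le> x" "0 \<le> y" "1 \<le> d"
  shows "x ^ d \<le> y \<longleftrightarrow> x \<le> y powr (1 / real d)"
proof
  assume h: "x ^ d \<le> y"
  have "(x ^ d) powr (1 / real d) \<le> y powr (1 / real d)" using h assms by (intro powr_mono2) auto
  moreover have "(x ^ d) powr (1 / real d) = x"
  proof (cases "x = 0")
    case True then show ?thesis using assms by simp
  next
    case False
    then have "x ^ d = x powr real d" using assms by (simp add: powr_realpow)
    then show ?thesis using assms by (simp add: powr_powr)
  qed
  ultimately show "x \<le> y powr (1 / real d)" by simp
next
  assume h: "x \<le> y powr (1 / real d)"
  then have "x ^ d \<le> (y powr (1 / real d)) ^ d" using assms by (intro power_mono) auto
  also have "\<dots> = y"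
  proof (cases "y = 0")
    case True then show ?thesis using assms by simp
  next
    case False
    then have "(y powr (1 / real d)) ^ d = (y powr (1 / real d)) powr real d"
      using assms by (simp add: powr_realpow)
    then show ?thesis using assms by (simp add: powr_powr)
  qed
  finally show "x ^ d \<le> y" .
qed

lemma sphere_area_pos: "0 < d \<Longrightarrow> 0 < sphere_area d"
  unfolding sphere_area_def by (intro divide_pos_pos) auto

lemma pointwise_ind:
  fixes \<gamma> C1 C2 :: real
  assumes g: "\<gamma> = (real CARD('n) + 2) / real CARD('n)" and C1: "0 < C1" and C2: "0 < C2"
  shows "\<exists>K>0. \<forall>r1 r2 (w1::real^'n) w2. 0 \<le> r1 \<longrightarrow> r1 \<le> C1 \<longrightarrow> 0 \<le> r2 \<longrightarrow> r2 \<le> C1 \<longrightarrow>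
     norm w1 \<le> C2 \<longrightarrow> norm w2 \<le> C2 \<longrightarrow>
     (\<integral>\<^sup>+ v. ennreal ((1 + (norm v)\<^sup>2) * \<bar>Mloc \<gamma> r1 w1 v - Mloc \<gamma> r2 w2 v\<bar>) \<partial>lborel)
       \<le> ennreal (K * (\<bar>r1 - r2\<bar> + norm (w1 - w2)))"
proof -
  let ?d = "CARD('n)"
  define cd where "cd = c_d ?d"
  have cd: "0 < cd" unfolding cd_def c_d_def using sphere_area_pos[of ?d] by simp
  interpret profile "Pind :: real \<Rightarrow> real^'n \<Rightarrow> real" "real ?d"
    using profile_ind[where 'a="real^'n"] by simp
  define a where "a r = (cd * r) powr (1 / real ?d)" for r
  define Am where "Am = a C1"
  define Lip where "Lip = real ?d * (Am + 2 * C2) powr (real ?d - 1)"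
  define K where "K = (1 + (3 * C2 + Am)\<^sup>2) * J * (cd + 2 * Lip) + 1"
  have Lip0: "0 \<le> Lip" unfolding Lip_def by simp
  have K: "0 < K" unfolding K_def using J_nonneg cd Lip0 by (intro add_nonneg_pos) auto
  have M: "Mloc \<gamma> r w v = Pind (a r) (v - w)" if "0 \<le> r" for r and w v :: "real^'n"
  proof -
    have "norm (w - v) ^ ?d \<le> cd * r \<longleftrightarrow> norm (v - w) \<le> a r"
      unfolding a_def using that cd by (subst pow_le_powr_iff) (auto simp: norm_minus_commute)
    then show ?thesis unfolding Mloc_def Pind_def g cd_def Let_def by simp
  qed
  have apow: "a r powr real ?d = cd * r" if "0 \<le> r" for r
    unfolding a_def using that cd by (simp add: powr_powr)
  have a0: "0 \<le> a r" for r unfolding a_def by simp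
  have aAm: "a r \<le> Am" if "0 \<le> r" "r \<le> C1" for r
    unfolding Am_def a_def using that cd by (intro powr_mono2) auto
  show ?thesis
  proof (intro exI[of _ K] conjI allI impI K)
    fix r1 r2 :: real and w1 w2 :: "real^'n"
    assume r: "0 \<le> r1" "r1 \<le> C1" "0 \<le> r2" "r2 \<le> C1" and w: "norm w1 \<le> C2" "norm w2 \<le> C2"
    have "(\<integral>\<^sup>+ v. ennreal ((1 + (norm v)\<^sup>2) * \<bar>Mloc \<gamma> r1 w1 v - Mloc \<gamma> r2 w2 v\<bar>) \<partial>lborel)
       = (\<integral>\<^sup>+ v. ennreal ((1 + (norm v)\<^sup>2) * \<bar>Pind (a r1) (v - w1) - Pind (a r2) (v - w2)\<bar>) \<partial>lborel)"
      using r by (simp add: M)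
    also have "\<dots> \<le> ennreal ((1 + (3 * C2 + Am)\<^sup>2) * J * (\<bar>a r1 powr real ?d - a r2 powr real ?d\<bar> + 2 * Lip * norm (w1 - w2)))"
      unfolding Lip_def using r w a0 aAm by (intro diff_bound) auto
    also have "\<dots> \<le> ennreal (K * (\<bar>r1 - r2\<bar> + norm (w1 - w2)))"
    proof (intro ennreal_leI)
      have e: "\<bar>a r1 powr real ?d - a r2 powr real ?d\<bar> = cd * \<bar>r1 - r2\<bar>"
      proof -
        have "\<bar>cd * r1 - cd * r2\<bar> = \<bar>cd * (r1 - r2)\<bar>" by (simp add: right_diff_distrib)
        also have "\<dots> = cd * \<bar>r1 - r2\<bar>" using cd by (simp add: abs_mult)
        finally show ?thesis using r by (simp add: apow)
      qed
      have "(1 + (3 * C2 + Am)\<^sup>2) * J * (cd * \<bar>r1 - r2\<bar> + 2 * Lip * norm (w1 - w2))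
          \<le> (1 + (3 * C2 + Am)\<^sup>2) * J * ((cd + 2 * Lip) * (\<bar>r1 - r2\<bar> + norm (w1 - w2)))"
        using J_nonneg cd Lip0 by (intro mult_left_mono) (auto simp: algebra_simps)
      also have "\<dots> \<le> K * (\<bar>r1 - r2\<bar> + norm (w1 - w2))"
        unfolding K_def by (simp add: algebra_simps)
      finally show "(1 + (3 * C2 + Am)\<^sup>2) * J * (\<bar>a r1 powr real ?d - a r2 powr real ?d\<bar> + 2 * Lip * norm (w1 - w2))
          \<le> K * (\<bar>r1 - r2\<bar> + norm (w1 - w2))" unfolding e .
    qed
    finally show "(\<integral>\<^sup>+ v. ennreal ((1 + (norm v)\<^sup>2) * \<bar>Mloc \<gamma> r1 w1 v - Mloc \<gamma> r2 w2 v\<bar>) \<partial>lborel)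
       \<le> ennreal (K * (\<bar>r1 - r2\<bar> + norm (w1 - w2)))" .
  qed
qed

lemma pointwise_pow:
  fixes \<gamma> C1 C2 :: real
  assumes g: "\<gamma> \<noteq> (real CARD('n) + 2) / real CARD('n)" and g1: "1 < \<gamma>"
    and np: "0 < n_exp CARD('n) \<gamma>" and C1: "0 < C1" and C2: "0 < C2"
  shows "\<exists>K>0. \<forall>r1 r2 (w1::real^'n) w2. 0 \<le> r1 \<longrightarrow> r1 \<le> C1 \<longrightarrow> 0 \<le> r2 \<longrightarrow> r2 \<le> C1 \<longrightarrow>
     norm w1 \<le> C2 \<longrightarrow> norm w2 \<le> C2 \<longrightarrow>
     (\<integral>\<^sup>+ v. ennreal ((1 + (norm v)\<^sup>2) * \<bar>Mloc \<gamma> r1 w1 v - Mloc \<gamma> r2 w2 v\<bar>) \<partial>lborel)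
       \<le> ennreal (K * (\<bar>r1 - r2\<bar> + norm (w1 - w2)))"
proof -
  let ?d = "CARD('n)"
  define p where "p = n_exp ?d \<gamma> / 2"
  have p: "0 < p" unfolding p_def using np by simp
  define q where "q = 2 * p + real ?d"
  have q: "q = 2 / (\<gamma> - 1)" unfolding q_def p_def n_exp_def using g1 by (simp add: field_simps)
  interpret profile "Ppow p :: real \<Rightarrow> real^'n \<Rightarrow> real" q
    using profile_pow[where 'a="real^'n", OF p] unfolding q_def by simp
  define A where "A = 2 * \<gamma> / (\<gamma> - 1)"
  have A: "0 < A" unfolding A_def using g1 by simp
  define c where "c = c_const ?d \<gamma>"
  define a where "a r = sqrt (A * r powr (\<gamma> - 1))" for r
  define A' where "A' = A powr (1 / (\<gamma> - 1))"
  define Am where "Am = a C1"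
  define Lip where "Lip = q * (Am + 2 * C2) powr (q - 1)"
  define K where "K = \<bar>c\<bar> * ((1 + (3 * C2 + Am)\<^sup>2) * J * (A' + 2 * Lip)) + 1"
  have Lip0: "0 \<le> Lip" unfolding Lip_def using q1 by simp
  have A'0: "0 \<le> A'" unfolding A'_def by simp
  have K: "0 < K" unfolding K_def using J_nonneg A'0 Lip0 by (intro add_nonneg_pos) auto
  have M: "Mloc \<gamma> r w v = c * Ppow p (a r) (v - w)" for r and w v :: "real^'n"
  proof -
    have "0 \<le> A * r powr (\<gamma> - 1)" using A by (intro mult_nonneg_nonneg) auto
    then have "(a r)\<^sup>2 = A * r powr (\<gamma> - 1)" unfolding a_def by (rule real_sqrt_pow2)
    then show ?thesis unfolding Mloc_def Ppow_def Let_def c_def p_def using g A_def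
      by (simp add: norm_minus_commute)
  qed
  have apow: "a r powr q = A' * r" if "0 \<le> r" for r
  proof -
    have "a r powr q = (A * r powr (\<gamma> - 1)) powr (1 / 2 * q)"
      unfolding a_def using A that by (simp add: powr_half_sqrt[symmetric] powr_powr)
    also have "\<dots> = A' * r"
      unfolding A'_def q using A that g1 by (simp add: powr_mult powr_powr)
    finally show ?thesis .
  qed
  have a0: "0 \<le> a r" for r unfolding a_def using A by (intro real_sqrt_ge_zero mult_nonneg_nonneg) auto
  have aAm: "a r \<le> Am" if "0 \<le> r" "r \<le> C1" for r
    unfolding Am_def a_def using that A g1 by (auto intro!: powr_mono2 mult_left_mono)
  show ?thesis
  proof (intro exI[of _ K] conjI allI impI K)
    fix r1 r2 :: real and w1 w2 :: "real^'n"
    assume r: "0 \<le> r1" "r1 \<le> C1" "0 \<le> r2" "r2 \<le> C1" and w: "norm w1 \<le> C2" "norm w2 \<le> C2"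
    have "(\<integral>\<^sup>+ v. ennreal ((1 + (norm v)\<^sup>2) * \<bar>Mloc \<gamma> r1 w1 v - Mloc \<gamma> r2 w2 v\<bar>) \<partial>lborel)
       = (\<integral>\<^sup>+ v. ennreal \<bar>c\<bar> * ennreal ((1 + (norm v)\<^sup>2) * \<bar>Ppow p (a r1) (v - w1) - Ppow p (a r2) (v - w2)\<bar>) \<partial>lborel)"
    proof (intro nn_integral_cong)
      fix v :: "real^'n"
      have eqv: "(1 + (norm v)\<^sup>2) * \<bar>Mloc \<gamma> r1 w1 v - Mloc \<gamma> r2 w2 v\<bar>
          = \<bar>c\<bar> * ((1 + (norm v)\<^sup>2) * \<bar>Ppow p (a r1) (v - w1) - Ppow p (a r2) (v - w2)\<bar>)"
        unfolding M by (simp add: right_diff_distrib[symmetric] abs_mult)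
      then show "ennreal ((1 + (norm v)\<^sup>2) * \<bar>Mloc \<gamma> r1 w1 v - Mloc \<gamma> r2 w2 v\<bar>)
         = ennreal \<bar>c\<bar> * ennreal ((1 + (norm v)\<^sup>2) * \<bar>Ppow p (a r1) (v - w1) - Ppow p (a r2) (v - w2)\<bar>)"
        by (subst eqv) (rule ennreal_mult', simp)
    qed
    also have "\<dots> = ennreal \<bar>c\<bar> * (\<integral>\<^sup>+ v. ennreal ((1 + (norm v)\<^sup>2) * \<bar>Ppow p (a r1) (v - w1) - Ppow p (a r2) (v - w2)\<bar>) \<partial>lborel)"
      by (intro nn_integral_cmult) measurable
    also have "\<dots> \<le> ennreal \<bar>c\<bar> * ennreal ((1 + (3 * C2 + Am)\<^sup>2) * J * (\<bar>a r1 powr q - a r2 powr q\<bar> + 2 * Lip * norm (w1 - w2)))"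
      unfolding Lip_def using r w a0 aAm by (intro mult_left_mono diff_bound) auto
    also have "\<dots> \<le> ennreal (K * (\<bar>r1 - r2\<bar> + norm (w1 - w2)))"
    proof -
      have e: "\<bar>a r1 powr q - a r2 powr q\<bar> = A' * \<bar>r1 - r2\<bar>"
      proof -
        have "\<bar>A' * r1 - A' * r2\<bar> = \<bar>A' * (r1 - r2)\<bar>" by (simp add: right_diff_distrib)
        also have "\<dots> = A' * \<bar>r1 - r2\<bar>" using A'0 by (simp add: abs_mult)
        finally show ?thesis using r by (simp add: apow)
      qed
      have "(1 + (3 * C2 + Am)\<^sup>2) * J * (A' * \<bar>r1 - r2\<bar> + 2 * Lip * norm (w1 - w2))
          \<le> (1 + (3 * C2 + Am)\<^sup>2) * J * ((A' + 2 * Lip) * (\<bar>r1 - r2\<bar> + norm (w1 - w2)))"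
        using J_nonneg A'0 Lip0 by (intro mult_left_mono) (auto simp: algebra_simps)
      then have "\<bar>c\<bar> * ((1 + (3 * C2 + Am)\<^sup>2) * J * (A' * \<bar>r1 - r2\<bar> + 2 * Lip * norm (w1 - w2)))
          \<le> \<bar>c\<bar> * ((1 + (3 * C2 + Am)\<^sup>2) * J * ((A' + 2 * Lip) * (\<bar>r1 - r2\<bar> + norm (w1 - w2))))"
        by (rule mult_left_mono) auto
      also have "\<dots> \<le> K * (\<bar>r1 - r2\<bar> + norm (w1 - w2))"
        unfolding K_def by (simp add: algebra_simps)
      finally have "\<bar>c\<bar> * ((1 + (3 * C2 + Am)\<^sup>2) * J * (\<bar>a r1 powr q - a r2 powr q\<bar> + 2 * Lip * norm (w1 - w2)))
          \<le> K * (\<bar>r1 - r2\<bar> + norm (w1 - w2))" unfolding e .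
      then show ?thesis by (subst ennreal_mult'[symmetric]) (auto intro: ennreal_leI)
    qed
    finally show "(\<integral>\<^sup>+ v. ennreal ((1 + (norm v)\<^sup>2) * \<bar>Mloc \<gamma> r1 w1 v - Mloc \<gamma> r2 w2 v\<bar>) \<partial>lborel)
       \<le> ennreal (K * (\<bar>r1 - r2\<bar> + norm (w1 - w2)))" .
  qed
qed

theorem lemma2p1:
  fixes \<gamma> C0 C1 C2 :: real
  assumes "admissible_gamma CARD('n) \<gamma>"
    and "C0 > 0" and "C1 > 0" and "C2 > 0"
  shows "\<exists>C>0. \<forall>(torus::bool) (f :: real^'n \<Rightarrow> real^'n \<Rightarrow> real) g.
     ((\<forall>h\<in>{f, g}.
        (\<forall>x v. h x v \<ge> 0) \<and>
        (\<lambda>(x, v). h x v) \<in> borel_measurable borel \<and>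
        (\<forall>x. integrable lborel (h x)) \<and>
        (\<forall>x. integrable lborel (\<lambda>v. norm v * h x v)) \<and>
        (torus \<longrightarrow> periodic_in_x h) \<and>
        (\<forall>x. rho h x \<le> C1 \<and> norm (vel h x) \<le> C2 \<and>
             (\<gamma> \<noteq> (real CARD('n) + 2) / real CARD('n) \<longrightarrow> C0 \<le> rho h x))))
     \<longrightarrow>
     (\<integral>\<^sup>+ x. (\<integral>\<^sup>+ v. ennreal ((1 + (norm v)\<^sup>2) * \<bar>Meq \<gamma> f x v - Meq \<gamma> g x v\<bar>) \<partial>lborel)
        \<partial>dom_measure torus)
     \<le> ennreal C * (\<integral>\<^sup>+ x. ennreal (\<bar>rho f x - rho g x\<bar> + norm (vel f x - vel g x))
        \<partial>dom_measure torus)"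
proof -
  let ?d = "CARD('n)"
  have "\<exists>K>0. \<forall>r1 r2 (w1::real^'n) w2. 0 \<le> r1 \<longrightarrow> r1 \<le> C1 \<longrightarrow> 0 \<le> r2 \<longrightarrow> r2 \<le> C1 \<longrightarrow>
     norm w1 \<le> C2 \<longrightarrow> norm w2 \<le> C2 \<longrightarrow>
     (\<integral>\<^sup>+ v. ennreal ((1 + (norm v)\<^sup>2) * \<bar>Mloc \<gamma> r1 w1 v - Mloc \<gamma> r2 w2 v\<bar>) \<partial>lborel)
       \<le> ennreal (K * (\<bar>r1 - r2\<bar> + norm (w1 - w2)))"
  proof (cases "\<gamma> = (real ?d + 2) / real ?d")
    case True
    then show ?thesis using pointwise_ind[OF True assms(3,4)] by blast
  next
    case False
    have d1: "1 \<le> real ?d" by simp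
    have g1: "1 < \<gamma>" using assms(1) False unfolding admissible_gamma_def by auto
    have "\<gamma> < (real ?d + 2) / real ?d"
    proof (cases "?d = 1")
      case True
      then show ?thesis using assms(1) False unfolding admissible_gamma_def by auto
    next
      case False': False
      then have d2: "2 \<le> ?d" using d1 by linarith
      then have g: "\<gamma> \<le> (real ?d + 4) / (real ?d + 2)"
        using assms(1) False unfolding admissible_gamma_def by auto
      have "(real ?d + 4) / (real ?d + 2) < (real ?d + 2) / real ?d"
        using d2 by (simp add: field_simps)
      then show ?thesis using g by linarith
    qed
    then have "\<gamma> - 1 < 2 / real ?d" using d1 by (simp add: field_simps)
    then have "real ?d < 2 / (\<gamma> - 1)" using g1 d1 by (simp add: field_simps)
    then have np: "0 < n_exp ?d \<gamma>" unfolding n_exp_def by simp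
    show ?thesis using pointwise_pow[OF False g1 np assms(3,4)] by blast
  qed
  then obtain K where K: "K > 0" and KP: "\<And>r1 r2 (w1::real^'n) w2. 0 \<le> r1 \<Longrightarrow> r1 \<le> C1 \<Longrightarrow> 0 \<le> r2 \<Longrightarrow> r2 \<le> C1 \<Longrightarrow>
     norm w1 \<le> C2 \<Longrightarrow> norm w2 \<le> C2 \<Longrightarrow>
     (\<integral>\<^sup>+ v. ennreal ((1 + (norm v)\<^sup>2) * \<bar>Mloc \<gamma> r1 w1 v - Mloc \<gamma> r2 w2 v\<bar>) \<partial>lborel)
       \<le> ennreal (K * (\<bar>r1 - r2\<bar> + norm (w1 - w2)))" by blast
  show ?thesis
  proof (intro exI[of _ K] conjI K allI impI)
    fix torus :: bool and f g :: "real^'n \<Rightarrow> real^'n \<Rightarrow> real"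
    assume H: "\<forall>h\<in>{f, g}.
        (\<forall>x v. h x v \<ge> 0) \<and>
        (\<lambda>(x, v). h x v) \<in> borel_measurable borel \<and>
        (\<forall>x. integrable lborel (h x)) \<and>
        (\<forall>x. integrable lborel (\<lambda>v. norm v * h x v)) \<and>
        (torus \<longrightarrow> periodic_in_x h) \<and>
        (\<forall>x. rho h x \<le> C1 \<and> norm (vel h x) \<le> C2 \<and>
             (\<gamma> \<noteq> (real CARD('n) + 2) / real CARD('n) \<longrightarrow> C0 \<le> rho h x))"
    have Hf: "\<And>x v. f x v \<ge> 0" "(\<lambda>(x, v). f x v) \<in> borel_measurable borel"
      "\<And>x. rho f x \<le> C1" "\<And>x. norm (vel f x) \<le> C2" using H by auto
    have Hg: "\<And>x v. g x v \<ge> 0" "(\<lambda>(x, v). g x v) \<in> borel_measurable borel"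
      "\<And>x. rho g x \<le> C1" "\<And>x. norm (vel g x) \<le> C2" using H by auto
    have rf: "0 \<le> rho f x" for x unfolding rho_def using Hf(1) by (intro integral_nonneg_AE) auto
    have rg: "0 \<le> rho g x" for x unfolding rho_def using Hg(1) by (intro integral_nonneg_AE) auto
    note mf = rho_meas[OF Hf(2)] and mg = rho_meas[OF Hg(2)]
    define G where "G x = \<bar>rho f x - rho g x\<bar> + norm (vel f x - vel g x)" for x
    have Gm: "(\<lambda>x. ennreal (G x)) \<in> borel_measurable (dom_measure torus)"
      by (rule dom_meas) (unfold G_def, use mf mg in measurable)
    have "(\<integral>\<^sup>+ x. (\<integral>\<^sup>+ v. ennreal ((1 + (norm v)\<^sup>2) * \<bar>Meq \<gamma> f x v - Meq \<gamma> g x v\<bar>) \<partial>lborel)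
        \<partial>dom_measure torus) \<le> (\<integral>\<^sup>+ x. ennreal K * ennreal (G x) \<partial>dom_measure torus)"
    proof (intro nn_integral_mono)
      fix x
      have "(\<integral>\<^sup>+ v. ennreal ((1 + (norm v)\<^sup>2) * \<bar>Meq \<gamma> f x v - Meq \<gamma> g x v\<bar>) \<partial>lborel)
          \<le> ennreal (K * G x)"
        unfolding Meq_def G_def using rf[of x] rg[of x] Hf(3,4) Hg(3,4) by (intro KP) auto
      also have "\<dots> = ennreal K * ennreal (G x)" using K by (simp add: ennreal_mult')
      finally show "(\<integral>\<^sup>+ v. ennreal ((1 + (norm v)\<^sup>2) * \<bar>Meq \<gamma> f x v - Meq \<gamma> g x v\<bar>) \<partial>lborel)
          \<le> ennreal K * ennreal (G x)" .
    qed
    also have "\<dots> = ennreal K * (\<integral>\<^sup>+ x. ennreal (G x) \<partial>dom_measure torus)"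
      using Gm by (rule nn_integral_cmult)
    finally show "(\<integral>\<^sup>+ x. (\<integral>\<^sup>+ v. ennreal ((1 + (norm v)\<^sup>2) * \<bar>Meq \<gamma> f x v - Meq \<gamma> g x v\<bar>) \<partial>lborel)
        \<partial>dom_measure torus)
     \<le> ennreal K * (\<integral>\<^sup>+ x. ennreal (\<bar>rho f x - rho g x\<bar> + norm (vel f x - vel g x))
        \<partial>dom_measure torus)" unfolding G_def .
  qed
qed

end
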